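(* Let $k\ge1$ and $r\ge1$ be integers, let $\Gamma_1,\ldots,\Gamma_k$ be finite nilpotent groups and let $\Gamma$ be an abelian group (written multiplicatively) of rank at most $r$. Let $\varphi:\Gamma_1\times\cdots\times\Gamma_k\to\Gamma$ be a map that is a homomorphism in each variable. Writing $\varphi(\Gamma_1,\ldots,\Gamma_k)=\{\varphi(g_1,\ldots,g_k):g_i\in\Gamma_i\}$, we have \[ \langle\varphi(\Gamma_1,\ldots,\Gamma_k)\rangle\subset\varphi(\Gamma_1,\ldots,\Gamma_k)^r. \]
   Context: The rank of a group is the minimal cardinality of a generating set. For a subset $X$ of a group, $X^r$ denotes the $r$-fold product set $\{x_1\cdots x_r:x_i\in X\}$, and $\langle X\rangle$ the subgroup generated by $X$. A map is a homomorphism in each variable if fixing all but one argument yields a group homomorphism in the remaining argument. *)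

theory Defs
  imports "HOL-Algebra.Algebra"
begin

text \<open>Lower central series: gamma_1 = G, gamma_(n+1) = [gamma_n, G]
  (indexed from 0 here).\<close>
fun lower_central :: "('a, 'b) monoid_scheme \<Rightarrow> nat \<Rightarrow> 'a set" where
  "lower_central G 0 = carrier G"
| "lower_central G (Suc n) =
     generate G {x \<otimes>\<^bsub>G\<^esub> y \<otimes>\<^bsub>G\<^esub> inv\<^bsub>G\<^esub> x \<otimes>\<^bsub>G\<^esub> inv\<^bsub>G\<^esub> y
                 | x y. x \<in> lower_central G n \<and> y \<in> carrier G}"

definition nilpotent_group :: "('a, 'b) monoid_scheme \<Rightarrow> bool" where
  "nilpotent_group G \<longleftrightarrow> group G \<and> (\<exists>n. lower_central G n = {\<one>\<^bsub>G\<^esub>})"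

definition rank_le :: "('a, 'b) monoid_scheme \<Rightarrow> nat \<Rightarrow> bool" where
  "rank_le G r \<longleftrightarrow> (\<exists>S. S \<subseteq> carrier G \<and> finite S \<and> card S \<le> r \<and> generate G S = carrier G)"

primrec set_power :: "('a, 'b) monoid_scheme \<Rightarrow> 'a set \<Rightarrow> nat \<Rightarrow> 'a set" where
  "set_power G W 0 = {\<one>\<^bsub>G\<^esub>}"
| "set_power G W (Suc n) = {x \<otimes>\<^bsub>G\<^esub> y | x y. x \<in> W \<and> y \<in> set_power G W n}"

definition multihom ::
  "nat \<Rightarrow> (nat \<Rightarrow> ('a, 'b) monoid_scheme) \<Rightarrow> ('c, 'd) monoid_scheme \<Rightarrow> ((nat \<Rightarrow> 'a) \<Rightarrow> 'c) \<Rightarrow> bool" where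
  "multihom k G H \<phi> \<longleftrightarrow>
     (\<forall>g \<in> (\<Pi>\<^sub>E i\<in>{..<k}. carrier (G i)). \<phi> g \<in> carrier H) \<and>
     (\<forall>g \<in> (\<Pi>\<^sub>E i\<in>{..<k}. carrier (G i)). \<forall>i<k. \<forall>x \<in> carrier (G i). \<forall>y \<in> carrier (G i).
        \<phi> (g(i := x \<otimes>\<^bsub>G i\<^esub> y)) = \<phi> (g(i := x)) \<otimes>\<^bsub>H\<^esub> \<phi> (g(i := y)))"

end

theory Submission
  imports Defs
begin


context comm_group begin

lemma generate_insert:
  assumes "s \<in> carrier G" "S \<subseteq> carrier G"
  shows "generate G (insert s S) = {s [^] (n::int) \<otimes> h | n h. h \<in> generate G S}"
proof
  let ?R = "{s [^] (n::int) \<otimes> h | n h. h \<in> generate G S}"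
  have gS: "generate G S \<subseteq> carrier G" using generate_incl assms by auto
  have sub: "subgroup ?R G"
  proof
    show "?R \<subseteq> carrier G" using gS assms by auto
  next
    fix x y assume "x \<in> ?R" "y \<in> ?R"
    then obtain n h m h' where x: "x = s [^] (n::int) \<otimes> h" "h \<in> generate G S"
      and y: "y = s [^] (m::int) \<otimes> h'" "h' \<in> generate G S" by blast
    have c: "h \<in> carrier G" "h' \<in> carrier G" "s [^] n \<in> carrier G" "s [^] m \<in> carrier G"
      using x y gS assms by auto
    have "x \<otimes> y = s [^] n \<otimes> s [^] m \<otimes> (h \<otimes> h')"
      using c x y by (simp add: m_ac)
    then have "x \<otimes> y = s [^] (n + m) \<otimes> (h \<otimes> h')"
      using assms by (simp add: int_pow_mult)
    moreover have "h \<otimes> h' \<in> generate G S" using x y by (simp add: generate.eng)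
    ultimately show "x \<otimes> y \<in> ?R" by blast
  next
    have "\<one> = s [^] (0::int) \<otimes> \<one>" by simp
    then show "\<one> \<in> ?R" using generate.one by blast
  next
    fix x assume "x \<in> ?R"
    then obtain n h where x: "x = s [^] (n::int) \<otimes> h" "h \<in> generate G S" by blast
    have "inv x = s [^] (- n) \<otimes> inv h"
      using x gS assms by (auto simp add: inv_mult int_pow_neg)
    moreover have "inv h \<in> generate G S" using x generate_m_inv_closed assms by auto
    ultimately show "inv x \<in> ?R" by blast
  qed
  have "insert s S \<subseteq> ?R"
  proof
    fix x assume "x \<in> insert s S"
    then show "x \<in> ?R"
    proof
      assume "x = s"
      then have "x = s [^] (1::int) \<otimes> \<one>" using assms by simp
      then show ?thesis using generate.one by blast
    next
      assume "x \<in> S"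
      then have xc: "x \<in> carrier G" using assms by blast
      then have "x = s [^] (0::int) \<otimes> x" by simp
      moreover have "x \<in> generate G S" using \<open>x \<in> S\<close> by (rule generate.incl)
      ultimately show ?thesis by blast
    qed
  qed
  then show "generate G (insert s S) \<subseteq> ?R"
    using generate_subgroup_incl sub by blast
next
  show "{s [^] (n::int) \<otimes> h | n h. h \<in> generate G S} \<subseteq> generate G (insert s S)"
  proof clarify
    fix n :: int and h assume h: "h \<in> generate G S"
    have "s [^] n \<in> generate G (insert s S)"
      using subgroup_int_pow_closed[OF generate_is_subgroup generate.incl[of s "insert s S"]] assms by auto
    moreover have "h \<in> generate G (insert s S)" using h mono_generate[of S "insert s S"] by auto
    ultimately show "s [^] n \<otimes> h \<in> generate G (insert s S)" by (simp add: generate.eng)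
  qed
qed

end


context comm_group begin

lemma int_pow_mod:
  assumes "x \<in> carrier G" "x [^] (N::nat) = \<one>" "N > 0"
  shows "x [^] (i::int) = x [^] (nat (i mod int N))"
proof -
  have "x [^] i = x [^] (int N * (i div int N) + i mod int N)" by simp
  also have "\<dots> = x [^] (int N * (i div int N)) \<otimes> x [^] (i mod int N)"
    using assms(1) by (rule int_pow_mult)
  finally have "x [^] i = x [^] (int N * (i div int N)) \<otimes> x [^] (i mod int N)" .
  also have "x [^] (int N * (i div int N)) = (x [^] int N) [^] (i div int N)"
    using assms(1) by (simp add: int_pow_pow)
  also have "\<dots> = \<one>" using assms by (simp add: int_pow_int)
  finally have "x [^] i = x [^] (i mod int N)" using assms(1) by simp
  also have "\<dots> = x [^] (nat (i mod int N))"
    using assms(3) by (simp add: pow_nat)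
  finally show ?thesis .
qed

lemma finite_generate:
  assumes "finite S" "S \<subseteq> carrier G" "\<And>x. x \<in> S \<Longrightarrow> x [^] (N::nat) = \<one>" "N > 0"
  shows "finite (generate G S)"
  using assms
proof (induction S rule: finite_induct)
  case empty then show ?case by (simp add: generate_empty)
next
  case (insert s S)
  have sc: "s \<in> carrier G" and Sc: "S \<subseteq> carrier G" using insert by auto
  have "generate G (insert s S) \<subseteq> (\<lambda>(n,h). s [^] (n::nat) \<otimes> h) ` ({..<N} \<times> generate G S)"
  proof
    fix y assume "y \<in> generate G (insert s S)"
    then obtain i h where y: "y = s [^] (i::int) \<otimes> h" "h \<in> generate G S"
      using generate_insert[OF sc Sc] by blast
    have "y = s [^] (nat (i mod int N)) \<otimes> h"
      using y int_pow_mod[OF sc insert.prems(2) insert.prems(3)] by simp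
    moreover have "nat (i mod int N) < N" using \<open>N > 0\<close>
      by (simp add: nat_less_iff)
    ultimately have "(nat (i mod int N), h) \<in> {..<N} \<times> generate G S" "y = (\<lambda>(n,h). s [^] (n::nat) \<otimes> h) (nat (i mod int N), h)"
      using y(2) by auto
    then show "y \<in> (\<lambda>(n,h). s [^] (n::nat) \<otimes> h) ` ({..<N} \<times> generate G S)"
      by (rule rev_image_eqI)
  qed
  moreover have "finite (generate G S)" using insert by auto
  moreover have "finite ({..<N} \<times> generate G S)" using calculation(2) by blast
  ultimately show ?case using finite_subset by blast
qed

lemma set_power_carrier:
  assumes "Xs \<subseteq> carrier G" shows "set_power G Xs n \<subseteq> carrier G"
  using assms by (induction n) auto

lemma set_power_Suc_mono:
  assumes "\<one> \<in> Xs" "Xs \<subseteq> carrier G" shows "set_power G Xs n \<subseteq> set_power G Xs (Suc n)"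
proof (induction n)
  case 0
  show ?case using assms by (auto intro!: exI[of _ "\<one>"])
next
  case (Suc n)
  show ?case
  proof
    fix z assume "z \<in> set_power G Xs (Suc n)"
    then obtain x y where "z = x \<otimes> y" "x \<in> Xs" "y \<in> set_power G Xs n" by auto
    then show "z \<in> set_power G Xs (Suc (Suc n))" using Suc.IH
      by (simp only: set_power.simps) blast
  qed
qed

lemma set_power_mono:
  assumes "\<one> \<in> Xs" "Xs \<subseteq> carrier G" "n \<le> m" shows "set_power G Xs n \<subseteq> set_power G Xs m"
  using assms(3)
proof (induction m rule: dec_induct)
  case base then show ?case by simp
next
  case (step m) then show ?case using set_power_Suc_mono[OF assms(1,2), of m] by blast
qed

lemma set_power_mult:
  assumes "W1 \<subseteq> carrier G" "W2 \<subseteq> carrier G" "\<And>a b. a \<in> W1 \<Longrightarrow> b \<in> W2 \<Longrightarrow> a \<otimes> b \<in> W"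
  shows "x \<in> set_power G W1 n \<Longrightarrow> y \<in> set_power G W2 n \<Longrightarrow> x \<otimes> y \<in> set_power G W n"
proof (induction n arbitrary: x y)
  case 0 then show ?case by simp
next
  case (Suc n)
  then obtain a x' b y' where x: "x = a \<otimes> x'" "a \<in> W1" "x' \<in> set_power G W1 n"
    and y: "y = b \<otimes> y'" "b \<in> W2" "y' \<in> set_power G W2 n" by auto
  have c: "a \<in> carrier G" "b \<in> carrier G" "x' \<in> carrier G" "y' \<in> carrier G"
    using x y assms subsetD[OF set_power_carrier[OF assms(1)]] subsetD[OF set_power_carrier[OF assms(2)]]
    by blast+
  have "x \<otimes> y = (a \<otimes> b) \<otimes> (x' \<otimes> y')" using x y c by (simp add: m_ac)
  moreover have "a \<otimes> b \<in> W" using assms x y by auto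
  moreover have "x' \<otimes> y' \<in> set_power G W n" using Suc.IH x y by auto
  ultimately show ?case by auto
qed

lemma generate_pow_image:
  assumes "Xs \<subseteq> carrier G" "a \<in> generate G Xs"
  shows "a [^] (u::nat) \<in> generate G ((\<lambda>x. x [^] u) ` Xs)"
  using assms(2)
proof (induction rule: generate.induct)
  case one then show ?case by (simp add: generate.one)
next
  case (incl h) then show ?case by (simp add: generate.incl)
next
  case (inv h)
  then have "h [^] u \<in> (\<lambda>x. x [^] u) ` Xs" by auto
  then have "inv (h [^] u) \<in> generate G ((\<lambda>x. x [^] u) ` Xs)" by (rule generate.inv)
  moreover have "inv h [^] u = inv (h [^] u)" using inv assms by (simp add: nat_pow_inv subsetD)
  ultimately show ?case by simp
next
  case (eng h1 h2)
  have "h1 \<in> carrier G" "h2 \<in> carrier G" using eng generate_in_carrier assms by auto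
  then have "(h1 \<otimes> h2) [^] u = h1 [^] u \<otimes> h2 [^] u" by (simp add: nat_pow_distrib)
  then show ?case using eng by (simp add: generate.eng)
qed

lemma generate_exponent:
  assumes "Xs \<subseteq> carrier G" "\<And>x. x \<in> Xs \<Longrightarrow> x [^] (N::nat) = \<one>" "a \<in> generate G Xs"
  shows "a [^] N = \<one>"
proof -
  have "(\<lambda>x. x [^] N) ` Xs \<subseteq> {\<one>}" using assms by auto
  then have "generate G ((\<lambda>x. x [^] N) ` Xs) \<subseteq> {\<one>}"
    using mono_generate generate_one by blast
  then show ?thesis using generate_pow_image[OF assms(1,3), of N] by auto
qed

lemma generate_subset_set_power:
  assumes Xs: "Xs \<subseteq> carrier G" "\<one> \<in> Xs" "\<And>x n. x \<in> Xs \<Longrightarrow> x [^] (n::nat) \<in> Xs"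
    "\<And>x. x \<in> Xs \<Longrightarrow> x [^] (N::nat) = \<one>" "N > 0"
    and "finite Y" "Y \<subseteq> Xs"
  shows "generate G Y \<subseteq> set_power G Xs (card Y)"
  using assms(6,7)
proof (induction Y rule: finite_induct)
  case empty then show ?case by (simp add: generate_empty)
next
  case (insert y Y)
  have yc: "y \<in> carrier G" and Yc: "Y \<subseteq> carrier G" using insert Xs by auto
  show ?case
  proof
    fix z assume "z \<in> generate G (insert y Y)"
    then obtain i h where z: "z = y [^] (i::int) \<otimes> h" "h \<in> generate G Y"
      using generate_insert[OF yc Yc] by blast
    have "z = y [^] (nat (i mod int N)) \<otimes> h"
      using z int_pow_mod[OF yc Xs(4) Xs(5)] insert by simp
    moreover have "y [^] (nat (i mod int N)) \<in> Xs" using Xs(3) insert.prems by blast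
    moreover have "h \<in> set_power G Xs (card Y)" using insert.IH insert.prems z(2) by blast
    moreover have "card (insert y Y) = Suc (card Y)" using insert.hyps by simp
    ultimately show "z \<in> set_power G Xs (card (insert y Y))" by auto
  qed
qed

end


lemma nt_lemma:
  fixes m a b :: int and p :: nat
  assumes "Factorial_Ring.prime p" "m dvd int p * a" "\<not> m dvd a" "m dvd int p * b"
  shows "\<exists>j::nat. j < p \<and> m dvd b - int j * a"
proof -
  have pp: "Factorial_Ring.prime (int p)" using assms(1) by simp
  have "\<not> coprime m (int p)"
  proof
    assume "coprime m (int p)"
    then have "m dvd a" using assms(2) by (simp add: coprime_dvd_mult_right_iff)
    then show False using assms(3) by simp
  qed
  then have "int p dvd m" using pp
    by (meson coprime_commute prime_imp_coprime)
  then obtain w where w: "m = int p * w" by blast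
  have p0: "int p \<noteq> 0" using assms(1) by auto
  have "w dvd a" using assms(2) w p0 by simp
  then obtain a' where a': "a = w * a'" by blast
  have "w dvd b" using assms(4) w p0 by simp
  then obtain b' where b': "b = w * b'" by blast
  have "\<not> int p dvd a'"
  proof
    assume "int p dvd a'"
    then have "m dvd a" using w a' by simp
    then show False using assms(3) by simp
  qed
  then have "coprime (int p) a'" using pp by (simp add: prime_imp_coprime)
  then have "gcd (int p) a' = 1" by simp
  then obtain u v where uv: "u * int p + v * a' = 1" using bezout_int[of "int p" a'] by auto
  define j where "j = nat ((b' * v) mod int p)"
  have j0: "int j = (b' * v) mod int p" using p0 j_def by simp
  have pp0: "int p > 0" using p0 by simp
  have "int j < int p" using j0 pp0 by simp
  then have jlt: "j < p" by simp
  obtain q where q: "b' * v = int p * q + int j" using j0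
    by (metis div_mult_mod_eq mult.commute)
  have "b' - int j * a' = b' * (u * int p + v * a') - int j * a'" using uv by simp
  also have "\<dots> = int p * (b' * u + q * a')" using q by (simp add: algebra_simps)
  finally have "int p dvd b' - int j * a'" by simp
  then have "m dvd w * (b' - int j * a')" using w by simp
  then have "m dvd b - int j * a" using a' b' by (simp add: algebra_simps)
  then show ?thesis using jlt by blast
qed



lemma int_ideal_gen:
  fixes I :: "int set"
  assumes sub: "\<And>x y. x \<in> I \<Longrightarrow> y \<in> I \<Longrightarrow> x - y \<in> I" and z: "0 \<in> I"
  shows "\<exists>m. I = {n. m dvd n}"
proof -
  have neg: "-x \<in> I" if "x \<in> I" for x using sub[OF z that] by simp
  have add: "x + y \<in> I" if "x \<in> I" "y \<in> I" for x y using sub[OF that(1) neg[OF that(2)]] by simp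
  have multn: "int k * x \<in> I" if "x \<in> I" for x k
    by (induction k) (auto simp: z algebra_simps add that)
  have mult: "c * x \<in> I" if "x \<in> I" for x c
  proof (cases "c \<ge> 0")
    case True then show ?thesis using multn[OF that, of "nat c"] by simp
  next
    case False then show ?thesis using neg[OF multn[OF that, of "nat (-c)"]] by simp
  qed
  show ?thesis
  proof (cases "I = {0}")
    case True then show ?thesis by (intro exI[of _ 0]) auto
  next
    case False
    then obtain x where x: "x \<in> I" "x \<noteq> 0" using z by blast
    have ex: "\<exists>n::nat. n > 0 \<and> int n \<in> I"
    proof (cases "x > 0")
      case True then show ?thesis using x by (intro exI[of _ "nat x"]) auto
    next
      case False then show ?thesis using x neg[OF x(1)] by (intro exI[of _ "nat (-x)"]) auto
    qed
    define m where "m = (LEAST n::nat. n > 0 \<and> int n \<in> I)"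
    have m: "m > 0" "int m \<in> I" using LeastI_ex[OF ex] unfolding m_def by auto
    have least: "\<not> (n > 0 \<and> int n \<in> I)" if "n < m" for n
      using not_less_Least[of n "\<lambda>n. n > 0 \<and> int n \<in> I"] that unfolding m_def by blast
    have "I = {n. int m dvd n}"
    proof
      show "I \<subseteq> {n. int m dvd n}"
      proof
        fix n assume n: "n \<in> I"
        have "n mod int m = n - (n div int m) * int m" by (simp add: mod_div_mult_eq[symmetric] algebra_simps)
        also have "\<dots> \<in> I" using sub[OF n mult[OF m(2)]] by simp
        finally have r: "n mod int m \<in> I" .
        have "nat (n mod int m) < m" using m(1) by (simp add: nat_less_iff)
        then have "\<not> (nat (n mod int m) > 0 \<and> int (nat (n mod int m)) \<in> I)" by (rule least)
        moreover have "n mod int m \<ge> 0" using m(1) by simp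
        ultimately have "n mod int m = 0" using r m(1) by simp
        then show "n \<in> {n. int m dvd n}" by auto
      qed
    next
      show "{n. int m dvd n} \<subseteq> I" using mult[OF m(2)] by (auto simp: mult.commute)
    qed
    then show ?thesis by blast
  qed
qed

context comm_group begin

lemma subgroup_nat_pow_closed:
  assumes "subgroup K G" "k \<in> K" shows "k [^] (n::nat) \<in> K"
  using subgroup_int_pow_closed[OF assms, of "int n"] by (simp add: int_pow_int)

lemma pow_prod_int:
  assumes "s \<in> carrier G" "k \<in> carrier G"
  shows "(s [^] (c::int) \<otimes> k) [^] (n::nat) = s [^] (c * int n) \<otimes> k [^] n"
proof -
  have "(s [^] c) [^] n = s [^] (c * int n)"
    using assms by (metis int_pow_int int_pow_pow)
  moreover have "(s [^] c \<otimes> k) [^] n = (s [^] c) [^] n \<otimes> k [^] n"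
    using assms by (simp add: nat_pow_distrib)
  ultimately show ?thesis by simp
qed

lemma coset_claim:
  fixes p :: nat
  assumes p: "Factorial_Ring.prime p" and K: "subgroup K G" and s: "s \<in> carrier G"
    and e0: "e0 = s [^] (a::int) \<otimes> h0" "h0 \<in> K" "e0 [^] p = \<one>" "e0 \<notin> K"
    and e: "e = s [^] (b::int) \<otimes> h" "h \<in> K" "e [^] p = \<one>"
  shows "\<exists>j<p. e \<otimes> inv (e0 [^] j) \<in> K"
proof -
  have Kc: "K \<subseteq> carrier G" using K subgroup.subset by blast
  have h0c: "h0 \<in> carrier G" and hc: "h \<in> carrier G" using Kc e0 e by auto
  let ?I = "{n::int. s [^] n \<in> K}"
  have "\<exists>m. ?I = {n. m dvd n}"
  proof (rule int_ideal_gen)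
    fix x y assume "x \<in> ?I" "y \<in> ?I"
    then have "s [^] x \<otimes> inv (s [^] y) \<in> K" using K by (simp add: subgroup.m_closed subgroup.m_inv_closed)
    then show "x - y \<in> ?I" using s by (simp add: int_pow_diff)
  next
    show "0 \<in> ?I" using K by (simp add: subgroup.one_closed)
  qed
  then obtain m where I: "?I = {n. m dvd n}" by blast
  have powI: "int p * c \<in> ?I" if "(s [^] c \<otimes> k) [^] p = \<one>" "k \<in> K" for c k
  proof -
    have kc: "k \<in> carrier G" using that Kc by auto
    have "(s [^] c \<otimes> k) [^] p = s [^] (c * int p) \<otimes> k [^] p"
      using pow_prod_int[OF s kc] .
    then have "s [^] (c * int p) = inv (k [^] p)" using that s kc
      by (metis inv_equality int_pow_closed nat_pow_closed)
    also have "\<dots> \<in> K" using K that by (simp add: subgroup.m_inv_closed subgroup_nat_pow_closed)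
    finally show ?thesis by (simp add: mult.commute)
  qed
  have d1: "m dvd int p * a" using powI[of a h0] e0 I by auto
  have d2: "m dvd int p * b" using powI[of b h] e I by auto
  have d3: "\<not> m dvd a"
  proof
    assume "m dvd a"
    then have "s [^] a \<in> K" using I by auto
    then have "e0 \<in> K" using e0 K by (simp add: subgroup.m_closed)
    then show False using e0 by simp
  qed
  obtain j where j: "j < p" "m dvd b - int j * a" using nt_lemma[OF p d1 d3 d2] by blast
  then have sK: "s [^] (b - int j * a) \<in> K" using I by auto
  have e0j: "e0 [^] j = s [^] (a * int j) \<otimes> h0 [^] j" using e0 pow_prod_int[OF s h0c] by simp
  have c2: "s [^] b \<in> carrier G" "s [^] (a * int j) \<in> carrier G" "h0 [^] j \<in> carrier G" using s h0c by auto
  have "e \<otimes> inv (e0 [^] j) = s [^] b \<otimes> h \<otimes> (inv (s [^] (a * int j)) \<otimes> inv (h0 [^] j))"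
    using e e0j c2 hc by (simp add: inv_mult)
  also have "\<dots> = (s [^] b \<otimes> inv (s [^] (a * int j))) \<otimes> (h \<otimes> inv (h0 [^] j))"
    using c2 hc by (simp add: m_ac)
  also have "s [^] b \<otimes> inv (s [^] (a * int j)) = s [^] (b - int j * a)"
    using s by (simp add: int_pow_diff mult.commute)
  finally have eq: "e \<otimes> inv (e0 [^] j) = s [^] (b - int j * a) \<otimes> (h \<otimes> inv (h0 [^] j))" .
  have "h \<otimes> inv (h0 [^] j) \<in> K" using K e e0
    by (simp add: subgroup.m_closed subgroup.m_inv_closed subgroup_nat_pow_closed)
  then have "e \<otimes> inv (e0 [^] j) \<in> K" using eq sK K by (simp add: subgroup.m_closed)
  then show ?thesis using j by blast
qed

end


context comm_group begin

lemma elem_bound: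
  fixes p :: nat
  assumes p: "Factorial_Ring.prime p" and S: "finite S" "S \<subseteq> carrier G"
  shows "subgroup E G \<Longrightarrow> finite E \<Longrightarrow> E \<subseteq> generate G S \<Longrightarrow> (\<forall>e\<in>E. e [^] p = \<one>)
     \<Longrightarrow> card E \<le> p ^ card S"
  using S
proof (induction S arbitrary: E rule: finite_induct)
  case empty
  then have "E \<subseteq> {\<one>}" by (simp add: generate_empty)
  then have "card E \<le> card {\<one>}" by (intro card_mono) auto
  then show ?case by simp
next
  case (insert s S)
  have sc: "s \<in> carrier G" and Sc: "S \<subseteq> carrier G" using insert by auto
  let ?K = "generate G S"
  have K: "subgroup ?K G" using generate_is_subgroup[OF Sc] .
  let ?E' = "E \<inter> ?K"
  have E'sub: "subgroup ?E' G" using subgroups_Inter_pair[OF insert.prems(1) K] .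
  have IH: "card ?E' \<le> p ^ card S"
    using insert.IH[OF E'sub _ _ _ Sc] insert.prems by auto
  have p1: "p \<ge> 1" using p prime_gt_0_nat by (simp add: Suc_leI)
  have fE': "finite ?E'" using insert.prems by auto
  have main: "card E \<le> p * card ?E'"
  proof (cases "E \<subseteq> ?K")
    case True
    then have "?E' = E" by auto
    then show ?thesis using p1 by simp
  next
    case False
    then obtain e0 where e0: "e0 \<in> E" "e0 \<notin> ?K" by blast
    have gi: "generate G (insert s S) = {s [^] (n::int) \<otimes> h | n h. h \<in> ?K}"
      using generate_insert[OF sc Sc] .
    obtain a h0 where ah0: "e0 = s [^] (a::int) \<otimes> h0" "h0 \<in> ?K"
      using e0 insert.prems(3) gi by blast
    have e0c: "e0 \<in> carrier G" using e0 insert.prems(1) subgroup.subset by blast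
    have cover: "E \<subseteq> (\<Union>j\<in>{..<p}. (\<lambda>h. e0 [^] j \<otimes> h) ` ?E')"
    proof
      fix e assume eE: "e \<in> E"
      obtain b h where bh: "e = s [^] (b::int) \<otimes> h" "h \<in> ?K"
        using eE insert.prems(3) gi by blast
      obtain j where j: "j < p" "e \<otimes> inv (e0 [^] j) \<in> ?K"
        using coset_claim[OF p K sc ah0 _ e0(2) bh] insert.prems(4) eE e0 by blast
      have ec: "e \<in> carrier G" using eE insert.prems(1) subgroup.subset by blast
      have "e \<otimes> inv (e0 [^] j) \<in> E" using insert.prems(1) eE e0
        by (simp add: subgroup.m_closed subgroup.m_inv_closed subgroup_nat_pow_closed)
      then have inE': "e \<otimes> inv (e0 [^] j) \<in> ?E'" using j by blast
      have "e = e0 [^] j \<otimes> (e \<otimes> inv (e0 [^] j))" using ec e0c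
        by (simp add: m_lcomm[symmetric] m_comm[of "e0 [^] j"] m_assoc)
      then show "e \<in> (\<Union>j\<in>{..<p}. (\<lambda>h. e0 [^] j \<otimes> h) ` ?E')" using inE' j by blast
    qed
    have "card E \<le> card (\<Union>j\<in>{..<p}. (\<lambda>h. e0 [^] j \<otimes> h) ` ?E')"
      using cover fE' by (intro card_mono) auto
    also have "\<dots> \<le> (\<Sum>j\<in>{..<p}. card ((\<lambda>h. e0 [^] j \<otimes> h) ` ?E'))"
      by (rule card_UN_le) simp
    also have "\<dots> \<le> (\<Sum>j\<in>{..<p}. card ?E')"
      by (intro sum_mono card_image_le fE')
    also have "\<dots> = p * card ?E'" by simp
    finally show ?thesis .
  qed
  have "card E \<le> p * p ^ card S" using main IH
    by (meson le_trans mult_le_mono2)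
  then show ?case using insert.hyps by simp
qed

end


context comm_group begin

lemma subgroup_prod:
  assumes A: "subgroup A G" and C: "subgroup C G"
  shows "subgroup {a \<otimes> c | a c. a \<in> A \<and> c \<in> C} G"
proof (rule subgroupI)
  have Ac: "A \<subseteq> carrier G" and Cc: "C \<subseteq> carrier G" using A C subgroup.subset by auto
  show "{a \<otimes> c | a c. a \<in> A \<and> c \<in> C} \<subseteq> carrier G" using Ac Cc by auto
  have "\<one> \<otimes> \<one> \<in> {a \<otimes> c | a c. a \<in> A \<and> c \<in> C}" using A C subgroup.one_closed by blast
  then show "{a \<otimes> c | a c. a \<in> A \<and> c \<in> C} \<noteq> {}" by blast
next
  have Ac: "A \<subseteq> carrier G" and Cc: "C \<subseteq> carrier G" using A C subgroup.subset by auto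
  fix x assume "x \<in> {a \<otimes> c | a c. a \<in> A \<and> c \<in> C}"
  then obtain a c where x: "x = a \<otimes> c" "a \<in> A" "c \<in> C" by blast
  have "a \<in> carrier G" "c \<in> carrier G" using x Ac Cc by auto
  then have "inv x = inv a \<otimes> inv c" using x by (simp add: inv_mult)
  moreover have "inv a \<in> A" using subgroup.m_inv_closed[OF A x(2)] .
  moreover have "inv c \<in> C" using subgroup.m_inv_closed[OF C x(3)] .
  ultimately show "inv x \<in> {a \<otimes> c | a c. a \<in> A \<and> c \<in> C}" by blast
next
  have Ac: "A \<subseteq> carrier G" and Cc: "C \<subseteq> carrier G" using A C subgroup.subset by auto
  fix x y assume "x \<in> {a \<otimes> c | a c. a \<in> A \<and> c \<in> C}" "y \<in> {a \<otimes> c | a c. a \<in> A \<and> c \<in> C}"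
  then obtain a c a' c' where x: "x = a \<otimes> c" "a \<in> A" "c \<in> C" and y: "y = a' \<otimes> c'" "a' \<in> A" "c' \<in> C"
    by blast
  have cc: "a \<in> carrier G" "c \<in> carrier G" "a' \<in> carrier G" "c' \<in> carrier G" using x y Ac Cc by auto
  have "x \<otimes> y = (a \<otimes> a') \<otimes> (c \<otimes> c')" using x y cc by (simp add: m_ac)
  moreover have "a \<otimes> a' \<in> A" using subgroup.m_closed[OF A x(2) y(2)] .
  moreover have "c \<otimes> c' \<in> C" using subgroup.m_closed[OF C x(3) y(3)] .
  ultimately show "x \<otimes> y \<in> {a \<otimes> c | a c. a \<in> A \<and> c \<in> C}" by blast
qed

lemma subgroup_powers:
  assumes B: "subgroup B G"
  shows "subgroup ((\<lambda>b. b [^] (n::nat)) ` B) G"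
proof (rule subgroupI)
  have Bc: "B \<subseteq> carrier G" using B subgroup.subset by auto
  show "(\<lambda>b. b [^] n) ` B \<subseteq> carrier G" using Bc by auto
  show "(\<lambda>b. b [^] n) ` B \<noteq> {}" using B subgroup.one_closed by blast
  fix x assume "x \<in> (\<lambda>b. b [^] n) ` B"
  then obtain b where b: "x = b [^] n" "b \<in> B" by (auto elim!: imageE)
  then have "inv x = (inv b) [^] n" using Bc by (auto simp: nat_pow_inv)
  moreover have "inv b \<in> B" using subgroup.m_inv_closed[OF B b(2)] .
  ultimately show "inv x \<in> (\<lambda>b. b [^] n) ` B" by blast
next
  have Bc: "B \<subseteq> carrier G" using B subgroup.subset by auto
  fix x y assume "x \<in> (\<lambda>b. b [^] n) ` B" "y \<in> (\<lambda>b. b [^] n) ` B"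
  then obtain b c where b: "x = b [^] n" "b \<in> B" and c: "y = c [^] n" "c \<in> B" by (auto elim!: imageE)
  moreover have "b \<in> carrier G" "c \<in> carrier G" using Bc b c by auto
  ultimately have "x \<otimes> y = (b \<otimes> c) [^] n" by (simp add: nat_pow_distrib)
  moreover have "b \<otimes> c \<in> B" using subgroup.m_closed[OF B b(2) c(2)] .
  ultimately show "x \<otimes> y \<in> (\<lambda>b. b [^] n) ` B" by blast
qed

lemma subgroup_torsion:
  assumes B: "subgroup B G"
  shows "subgroup {b \<in> B. b [^] (n::nat) = \<one>} G"
proof (rule subgroupI)
  have Bc: "B \<subseteq> carrier G" using B subgroup.subset by auto
  show "{b \<in> B. b [^] n = \<one>} \<subseteq> carrier G" using Bc by auto
  have "\<one> \<in> {b \<in> B. b [^] n = \<one>}" using subgroup.one_closed[OF B] by simp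
  then show "{b \<in> B. b [^] n = \<one>} \<noteq> {}" by blast
  fix x assume x: "x \<in> {b \<in> B. b [^] n = \<one>}"
  then have xc: "x \<in> carrier G" "x \<in> B" "x [^] n = \<one>" using Bc by auto
  have "inv x [^] n = inv (x [^] n)" using xc(1) by (rule nat_pow_inv)
  then have "inv x [^] n = \<one>" using xc by simp
  moreover have "inv x \<in> B" using subgroup.m_inv_closed[OF B xc(2)] .
  ultimately show "inv x \<in> {b \<in> B. b [^] n = \<one>}" by blast
next
  have Bc: "B \<subseteq> carrier G" using B subgroup.subset by auto
  fix x y assume x: "x \<in> {b \<in> B. b [^] n = \<one>}" and y: "y \<in> {b \<in> B. b [^] n = \<one>}"
  then have xc: "x \<in> carrier G" "x \<in> B" "x [^] n = \<one>" and yc: "y \<in> carrier G" "y \<in> B" "y [^] n = \<one>"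
    using Bc by auto
  have "(x \<otimes> y) [^] n = x [^] n \<otimes> y [^] n" using xc(1) yc(1) by (rule nat_pow_distrib)
  then have "(x \<otimes> y) [^] n = \<one>" using xc yc by simp
  moreover have "x \<otimes> y \<in> B" using subgroup.m_closed[OF B xc(2) yc(2)] .
  ultimately show "x \<otimes> y \<in> {b \<in> B. b [^] n = \<one>}" by blast
qed

lemma card_fibers:
  assumes B: "subgroup B G" "finite B"
  shows "card B \<le> card ((\<lambda>b. b [^] (n::nat)) ` B) * card {b \<in> B. b [^] n = \<one>}"
proof -
  let ?P = "(\<lambda>b. b [^] n) ` B" and ?T = "{b \<in> B. b [^] n = \<one>}"
  have Bc: "B \<subseteq> carrier G" using B subgroup.subset by auto
  have fT: "finite ?T" using B by auto
  have fib: "card {b \<in> B. b [^] n = c} \<le> card ?T" for c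
  proof (cases "{b \<in> B. b [^] n = c} = {}")
    case True then show ?thesis by (metis card.empty zero_le)
  next
    case False
    then obtain b0 where b0: "b0 \<in> B" "b0 [^] n = c" by blast
    have b0c: "b0 \<in> carrier G" using b0 Bc by auto
    have "{b \<in> B. b [^] n = c} \<subseteq> (\<lambda>t. b0 \<otimes> t) ` ?T"
    proof
      fix b assume b: "b \<in> {b \<in> B. b [^] n = c}"
      have bc: "b \<in> carrier G" using b Bc by auto
      have "(inv b0 \<otimes> b) [^] n = (inv b0) [^] n \<otimes> b [^] n" using b0c bc by (simp add: nat_pow_distrib)
      also have "\<dots> = inv (b0 [^] n) \<otimes> b0 [^] n" using b b0 b0c by (simp add: nat_pow_inv)
      also have "\<dots> = \<one>" using b0c by (simp add: l_inv)
      finally have "inv b0 \<otimes> b \<in> ?T" using b b0 B by (simp add: subgroup.m_closed subgroup.m_inv_closed)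
      moreover have "b = b0 \<otimes> (inv b0 \<otimes> b)" using b0c bc by (simp add: m_assoc[symmetric])
      ultimately show "b \<in> (\<lambda>t. b0 \<otimes> t) ` ?T" by blast
    qed
    then have "card {b \<in> B. b [^] n = c} \<le> card ((\<lambda>t. b0 \<otimes> t) ` ?T)"
      using fT by (intro card_mono) auto
    also have "\<dots> \<le> card ?T" using fT by (rule card_image_le)
    finally show ?thesis .
  qed
  have "B = (\<Union>c\<in>?P. {b \<in> B. b [^] n = c})" by auto
  then have "card B = card (\<Union>c\<in>?P. {b \<in> B. b [^] n = c})" by simp
  also have "\<dots> \<le> (\<Sum>c\<in>?P. card {b \<in> B. b [^] n = c})"
    using B by (intro card_UN_le) auto
  also have "\<dots> \<le> (\<Sum>c\<in>?P. card ?T)" by (intro sum_mono fib)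
  also have "\<dots> = card ?P * card ?T" by simp
  finally show ?thesis .
qed

end


context comm_group begin

lemma p_lemma:
  fixes p a r :: nat
  assumes p: "Factorial_Ring.prime p"
    and S: "S \<subseteq> carrier G" "finite S" "card S \<le> r" "generate G S = carrier G"
    and Xs: "Xs \<subseteq> carrier G" "finite Xs" "\<one> \<in> Xs" "\<And>x n. x \<in> Xs \<Longrightarrow> x [^] (n::nat) \<in> Xs"
       "\<And>x. x \<in> Xs \<Longrightarrow> x [^] (p ^ a) = \<one>"
  shows "generate G Xs \<subseteq> set_power G Xs r"
proof -
  define B where "B = generate G Xs"
  have Bsub: "subgroup B G" unfolding B_def using generate_is_subgroup[OF Xs(1)] .
  have p1: "p > 1" using p prime_gt_1_nat by blast
  have N0: "p ^ a > 0" using p1 by simp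
  have fB: "finite B" unfolding B_def using finite_generate[OF Xs(2) Xs(1) Xs(5) N0] .
  have Bexp: "b [^] (p ^ a) = \<one>" if "b \<in> B" for b
  proof -
    have bg: "b \<in> generate G Xs" using that unfolding B_def .
    show ?thesis by (rule generate_exponent[OF Xs(1) Xs(5) bg])
  qed
  have Bc: "B \<subseteq> carrier G" using subgroup.subset[OF Bsub] .
  have XB: "Xs \<subseteq> B"
  proof
    fix x assume "x \<in> Xs" then show "x \<in> B" unfolding B_def by (rule generate.incl)
  qed
  define \<Phi> where "\<Phi> = (\<lambda>b. b [^] p) ` B"
  have \<Phi>sub: "subgroup \<Phi> G" unfolding \<Phi>_def using subgroup_powers[OF Bsub] .
  have \<Phi>B: "\<Phi> \<subseteq> B" unfolding \<Phi>_def using subgroup_nat_pow_closed[OF Bsub] by blast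
  define K where "K Y = {g \<otimes> c | g c. g \<in> generate G Y \<and> c \<in> \<Phi>}" for Y
  have Ksub: "subgroup (K Y) G" if "Y \<subseteq> carrier G" for Y
    unfolding K_def using subgroup_prod[OF generate_is_subgroup[OF that] \<Phi>sub] .
  have KB: "K Y \<subseteq> B" if "Y \<subseteq> Xs" for Y
  proof
    fix z assume "z \<in> K Y"
    then obtain g c where gc: "z = g \<otimes> c" "g \<in> generate G Y" "c \<in> \<Phi>" unfolding K_def by blast
    have "g \<in> B" using gc(2) mono_generate[OF that] unfolding B_def by blast
    moreover have "c \<in> B" using gc(3) \<Phi>B by blast
    ultimately show "z \<in> B" using gc(1) subgroup.m_closed[OF Bsub] by blast
  qed
  have one\<Phi>: "\<one> \<in> \<Phi>" using subgroup.one_closed[OF \<Phi>sub] .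
  have YK: "Y \<subseteq> K Y" if "Y \<subseteq> carrier G" for Y
  proof
    fix y assume y: "y \<in> Y"
    then have "y = y \<otimes> \<one>" using that by auto
    moreover have "y \<in> generate G Y" using y by (rule generate.incl)
    ultimately show "y \<in> K Y" unfolding K_def using one\<Phi> by blast
  qed
  have fK: "finite (K Y)" if "Y \<subseteq> Xs" for Y using KB[OF that] fB finite_subset by blast
  have grow: "p * card (K Y) \<le> card (K (insert y Y))"
    if Y: "Y \<subseteq> Xs" and y: "y \<in> Xs" "y \<notin> K Y" for Y y
  proof -
    have Yc: "Y \<subseteq> carrier G" using Y Xs(1) by blast
    have yc: "y \<in> carrier G" using y Xs(1) by blast
    have KY: "subgroup (K Y) G" using Ksub[OF Yc] .
    have KYc: "K Y \<subseteq> carrier G" using subgroup.subset[OF KY] .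
    define C where "C i = (\<lambda>k. y [^] i \<otimes> k) ` K Y" for i :: nat
    have ypK: "y [^] p \<in> K Y"
    proof -
      have "y [^] p \<in> \<Phi>" unfolding \<Phi>_def using y XB by blast
      moreover have "\<one> \<in> generate G Y" by (rule generate.one)
      ultimately have "\<one> \<otimes> y [^] p \<in> K Y" unfolding K_def by blast
      then show ?thesis using yc by simp
    qed
    have disj: "C i \<inter> C j = {}" if ij: "i < j" "j < p" for i j
    proof (rule ccontr)
      assume "C i \<inter> C j \<noteq> {}"
      then obtain k k' where kk: "k \<in> K Y" "k' \<in> K Y" "y [^] i \<otimes> k = y [^] j \<otimes> k'"
        unfolding C_def by blast
      have kc: "k \<in> carrier G" "k' \<in> carrier G" using kk KYc by auto
      define d where "d = j - i"
      have jd: "j = i + d" using ij d_def by simp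
      have yj: "y [^] j = y [^] i \<otimes> y [^] d" using nat_pow_mult[OF yc, of i d] jd by simp
      have ypc: "y [^] i \<in> carrier G" "y [^] d \<in> carrier G" using yc by auto
      have "y [^] j \<otimes> k' = (y [^] i \<otimes> y [^] d) \<otimes> k'" by (simp only: yj)
      also have "\<dots> = y [^] i \<otimes> (y [^] d \<otimes> k')" by (rule m_assoc[OF ypc kc(2)])
      finally have yjk: "y [^] j \<otimes> k' = y [^] i \<otimes> (y [^] d \<otimes> k')" .
      have eq1: "y [^] i \<otimes> k = y [^] i \<otimes> (y [^] d \<otimes> k')" using kk(3) yjk by (rule trans)
      have kd: "k = y [^] d \<otimes> k'" using eq1 ypc kc by (metis l_cancel m_closed)
      have "k \<otimes> inv k' = y [^] d" using kd ypc kc by (metis m_assoc r_inv r_one inv_closed)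
      then have "y [^] d = k \<otimes> inv k'" by simp
      then have ydK: "y [^] d \<in> K Y" using kk KY by (simp add: subgroup.m_closed subgroup.m_inv_closed)
      have d0: "0 < d" "d < p" using ij d_def by auto
      have "coprime d p"
        using d0 p by (metis coprime_commute nat_dvd_not_less prime_imp_coprime_nat)
      then have "gcd (int d) (int p) = 1" by (simp add: coprime_iff_gcd_eq_1[symmetric])
      then obtain u v where uv: "u * int d + v * int p = 1" using bezout_int[of "int d" "int p"] by auto
      have "y = y [^] (u * int d + v * int p)" using uv yc by simp
      also have "\<dots> = (y [^] int d) [^] u \<otimes> (y [^] int p) [^] v"
        using yc by (simp add: int_pow_mult int_pow_pow mult.commute)
      also have "\<dots> = (y [^] d) [^] u \<otimes> (y [^] p) [^] v" by (simp add: int_pow_int)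
      finally have yeq: "y = (y [^] d) [^] u \<otimes> (y [^] p) [^] v" .
      have "(y [^] d) [^] u \<otimes> (y [^] p) [^] v \<in> K Y"
        using subgroup.m_closed[OF KY subgroup_int_pow_closed[OF KY ydK] subgroup_int_pow_closed[OF KY ypK]] .
      then have "y \<in> K Y" using yeq by simp
      then show False using y by simp
    qed
    have disj2: "\<forall>i\<in>{..<p}. \<forall>j\<in>{..<p}. i \<noteq> j \<longrightarrow> C i \<inter> C j = {}"
    proof (intro ballI impI)
      fix i j assume "i \<in> {..<p}" "j \<in> {..<p}" "i \<noteq> j"
      then show "C i \<inter> C j = {}"
        using disj[of i j] disj[of j i] by (cases "i < j") (auto simp: Int_commute)
    qed
    have cardC: "card (C i) = card (K Y)" for i
      unfolding C_def using yc KYc by (intro card_image inj_onI) (auto simp: subsetD)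
    have fC: "finite (C i)" for i unfolding C_def using fK[OF Y] by simp
    have "(\<Union>i\<in>{..<p}. C i) \<subseteq> K (insert y Y)"
    proof
      fix z assume "z \<in> (\<Union>i\<in>{..<p}. C i)"
      then obtain i :: nat and k where ik: "z = y [^] i \<otimes> k" "k \<in> K Y" unfolding C_def by blast
      then obtain g c where gc: "k = g \<otimes> c" "g \<in> generate G Y" "c \<in> \<Phi>" unfolding K_def by blast
      have gen: "generate G Y \<subseteq> generate G (insert y Y)" by (rule mono_generate) auto
      have yi: "y [^] i \<in> generate G (insert y Y)"
        using subgroup_nat_pow_closed[OF generate_is_subgroup generate.incl[of y "insert y Y"]] Yc yc by auto
      have "y [^] i \<otimes> g \<in> generate G (insert y Y)" using yi gc(2) gen by (simp add: generate.eng subsetD)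
      moreover have "z = (y [^] i \<otimes> g) \<otimes> c"
        using ik gc yc generate_in_carrier[OF Yc gc(2)] \<Phi>sub subgroup.subset gc(3)
        by (metis m_assoc nat_pow_closed subsetD)
      ultimately show "z \<in> K (insert y Y)" unfolding K_def using gc(3) by blast
    qed
    moreover have "finite (K (insert y Y))" using fK Y y by auto
    ultimately have "card (\<Union>i\<in>{..<p}. C i) \<le> card (K (insert y Y))" by (rule card_mono[rotated])
    moreover have "card (\<Union>i\<in>{..<p}. C i) = (\<Sum>i\<in>{..<p}. card (C i))"
      using fC disj2 by (intro card_UN_disjoint) auto
    ultimately show ?thesis using cardC by simp
  qed
  define F where "F Y \<longleftrightarrow> Y \<subseteq> Xs \<and> p ^ card Y * card \<Phi> \<le> card (K Y)" for Y
  have \<Phi>c: "\<Phi> \<subseteq> carrier G" using subgroup.subset[OF \<Phi>sub] .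
  have K0: "K {} = \<Phi>"
  proof -
    have "K {} = {g \<otimes> c | g c. g \<in> {\<one>} \<and> c \<in> \<Phi>}" unfolding K_def by (simp add: generate_empty)
    also have "\<dots> = \<Phi>" using \<Phi>c by force
    finally show ?thesis .
  qed
  have F0: "F {}" unfolding F_def using K0 by simp
  have Fb: "\<forall>Y. F Y \<longrightarrow> card Y < Suc (card Xs)"
  proof (intro allI impI)
    fix Y assume "F Y"
    then have "Y \<subseteq> Xs" unfolding F_def by simp
    then have "card Y \<le> card Xs" using Xs(2) by (rule card_mono[rotated])
    then show "card Y < Suc (card Xs)" by simp
  qed
  obtain Y where Y: "F Y" and Ymax: "\<And>Y'. F Y' \<Longrightarrow> card Y' \<le> card Y"
    using Lattices_Big.ex_has_greatest_nat[of F "{}" card "Suc (card Xs)", OF F0 Fb] by blast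
  have YX: "Y \<subseteq> Xs" using Y unfolding F_def by simp
  have Yc: "Y \<subseteq> carrier G" using YX Xs(1) by blast
  have fY: "finite Y" using YX Xs(2) finite_subset by blast
  have XK: "Xs \<subseteq> K Y"
  proof (rule ccontr)
    assume "\<not> Xs \<subseteq> K Y"
    then obtain y where y: "y \<in> Xs" "y \<notin> K Y" by blast
    have yY: "y \<notin> Y" using y YK[OF Yc] by blast
    have "p ^ card (insert y Y) * card \<Phi> = p * (p ^ card Y * card \<Phi>)" using yY fY by simp
    also have "\<dots> \<le> p * card (K Y)" using Y unfolding F_def by simp
    also have "\<dots> \<le> card (K (insert y Y))" using grow[OF YX y] .
    finally have "F (insert y Y)" using YX y unfolding F_def by simp
    then have "card (insert y Y) \<le> card Y" by (rule Ymax)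
    then show False using yY fY by simp
  qed
  have BK: "B \<subseteq> K Y" unfolding B_def using generate_subgroup_incl[OF XK Ksub[OF Yc]] .
  define T where "T = {b \<in> B. b [^] p = \<one>}"
  have Tsub: "subgroup T G" unfolding T_def using subgroup_torsion[OF Bsub] .
  have fT: "finite T" unfolding T_def using fB by simp
  have TS: "T \<subseteq> generate G S" using S(4) Bc unfolding T_def by auto
  have Texp: "\<forall>e\<in>T. e [^] p = \<one>" unfolding T_def by simp
  have cT: "card T \<le> p ^ card S" using elem_bound[OF p S(2) S(1) Tsub fT TS Texp] .
  have cB: "card B \<le> card \<Phi> * card T" using card_fibers[OF Bsub fB, of p] unfolding \<Phi>_def T_def .
  have cK: "card (K Y) \<le> card B" using KB[OF YX] fB by (rule card_mono[rotated])
  have \<Phi>pos: "card \<Phi> > 0"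
  proof -
    have "finite \<Phi>" unfolding \<Phi>_def using fB by simp
    then show ?thesis using one\<Phi> card_gt_0_iff by blast
  qed
  have "p ^ card Y * card \<Phi> \<le> card \<Phi> * p ^ card S"
  proof -
    have "p ^ card Y * card \<Phi> \<le> card (K Y)" using Y unfolding F_def by simp
    also have "\<dots> \<le> card B" by (rule cK)
    also have "\<dots> \<le> card \<Phi> * card T" by (rule cB)
    also have "\<dots> \<le> card \<Phi> * p ^ card S" using cT by simp
    finally show ?thesis .
  qed
  then have "p ^ card Y \<le> p ^ card S" using \<Phi>pos by (simp add: mult.commute)
  then have "card Y \<le> card S" using power_le_imp_le_exp[OF p1] by blast
  then have cYr: "card Y \<le> r" using S(3) by simp
  have gYsub: "subgroup (generate G Y) G" using generate_is_subgroup[OF Yc] .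
  have frat: "\<forall>b\<in>B. \<exists>g\<in>generate G Y. \<exists>c\<in>B. b = g \<otimes> c [^] (p ^ n)" for n
  proof (induction n)
    case 0
    show ?case
    proof
      fix b assume b: "b \<in> B"
      then have "b = \<one> \<otimes> b [^] (p ^ 0)" using Bc by auto
      moreover have "\<one> \<in> generate G Y" by (rule generate.one)
      ultimately show "\<exists>g\<in>generate G Y. \<exists>c\<in>B. b = g \<otimes> c [^] (p ^ 0)" using b by blast
    qed
  next
    case (Suc n)
    show ?case
    proof
      fix b assume b: "b \<in> B"
      obtain g c where gc: "g \<in> generate G Y" "c \<in> B" "b = g \<otimes> c [^] (p ^ n)" using Suc.IH b by blast
      obtain g' e where ge: "c = g' \<otimes> e" "g' \<in> generate G Y" "e \<in> \<Phi>" using BK gc(2) unfolding K_def by blast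
      obtain d where d: "e = d [^] p" "d \<in> B" using ge(3) unfolding \<Phi>_def by blast
      have gcc: "g \<in> carrier G" "g' \<in> carrier G" using gc(1) ge(2) generate_in_carrier[OF Yc] by auto
      have dc: "d \<in> carrier G" using d Bc by auto
      have "c [^] (p ^ n) = g' [^] (p ^ n) \<otimes> (d [^] p) [^] (p ^ n)"
        using ge d gcc dc by (simp add: nat_pow_distrib)
      also have "(d [^] p) [^] (p ^ n) = d [^] (p ^ Suc n)" using dc by (simp add: nat_pow_pow)
      finally have "b = g \<otimes> (g' [^] (p ^ n) \<otimes> d [^] (p ^ Suc n))" using gc(3) by simp
      also have "\<dots> = (g \<otimes> g' [^] (p ^ n)) \<otimes> d [^] (p ^ Suc n)"
        using gcc dc by (simp add: m_assoc)
      finally have beq: "b = (g \<otimes> g' [^] (p ^ n)) \<otimes> d [^] (p ^ Suc n)" .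
      have "g \<otimes> g' [^] (p ^ n) \<in> generate G Y"
        using subgroup.m_closed[OF gYsub gc(1) subgroup_nat_pow_closed[OF gYsub ge(2)]] .
      then show "\<exists>g\<in>generate G Y. \<exists>c\<in>B. b = g \<otimes> c [^] (p ^ Suc n)" using beq d(2) by blast
    qed
  qed
  have BY: "B \<subseteq> generate G Y"
  proof
    fix b assume b: "b \<in> B"
    obtain g c where gc: "g \<in> generate G Y" "c \<in> B" "b = g \<otimes> c [^] (p ^ a)" using frat[of a] b by blast
    have "b = g" using gc Bexp[OF gc(2)] generate_in_carrier[OF Yc gc(1)] by simp
    then show "b \<in> generate G Y" using gc(1) by simp
  qed
  have "generate G Y \<subseteq> set_power G Xs (card Y)"
    using generate_subset_set_power[OF Xs(1) Xs(3) Xs(4) Xs(5) N0 fY YX] .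
  also have "\<dots> \<subseteq> set_power G Xs r" using set_power_mono[OF Xs(3) Xs(1) cYr] .
  finally show ?thesis using BY unfolding B_def by blast
qed

end


lemma nat_split:
  fixes N :: nat
  assumes "N > 0"
  shows "(\<exists>p a. Factorial_Ring.prime p \<and> N = p ^ a) \<or>
         (\<exists>N1 N2. N = N1 * N2 \<and> coprime N1 N2 \<and> 1 < N1 \<and> 1 < N2)"
proof (cases "N = 1")
  case True
  then have "Factorial_Ring.prime (2::nat) \<and> N = 2 ^ 0" by simp
  then show ?thesis by blast
next
  case False
  then obtain p :: nat where p: "Factorial_Ring.prime p" "p dvd N" using prime_factor_nat by blast
  have p1: "p \<noteq> 1" using p(1) by auto
  have p1': "\<not> is_unit p" using p1 by simp
  have N0: "N \<noteq> 0" using assms by simp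
  obtain y where y: "N = p ^ multiplicity p N * y" "\<not> p dvd y"
    by (rule multiplicity_decompose'[of N p, OF N0 p1'])
  define m where "m = multiplicity p N"
  have ym: "N = p ^ m * y" using y m_def by simp
  have m0: "m > 0"
  proof (rule ccontr)
    assume "\<not> m > 0" then have "N = y" using ym by simp
    then show False using p y by simp
  qed
  show ?thesis
  proof (cases "y = 1")
    case True then show ?thesis using ym p by auto
  next
    case False
    have y0: "y > 0" using ym assms by (metis gr0I mult_0_right)
    have "coprime p y" using p(1) y(2) by (simp add: prime_imp_coprime)
    then have "coprime (p ^ m) y" by simp
    moreover have "1 < p ^ m" using m0 p(1) prime_gt_1_nat by (metis one_less_power)
    moreover have "1 < y" using False y0 by simp
    ultimately show ?thesis using ym by blast
  qed
qed

lemma crt_nat: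
  fixes N1 N2 :: nat
  assumes "coprime N1 N2" "1 < N1" "1 < N2"
  shows "\<exists>u. u mod N1 = 1 \<and> N2 dvd u"
proof -
  have "N2 \<noteq> 0" using assms by simp
  then obtain x y where xy: "N2 * x = N1 * y + gcd N2 N1" using bezout_nat by blast
  have "gcd N2 N1 = 1" using assms(1) by (simp add: coprime_commute)
  then have "N2 * x = N1 * y + 1" using xy by simp
  then have "N2 * x = 1 + N1 * y" by simp
  moreover have "(1 + N1 * y) mod N1 = 1" using assms(2) by (metis mod_less mod_mult_self2)
  ultimately have "(N2 * x) mod N1 = 1" by simp
  then show ?thesis by (intro exI[of _ "N2 * x"]) simp
qed

context comm_group begin

lemma pow_mod_nat:
  assumes "x \<in> carrier G" "x [^] (M::nat) = \<one>"
  shows "x [^] (n::nat) = x [^] (n mod M)"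
proof -
  have "x [^] n = x [^] (M * (n div M) + n mod M)" by simp
  also have "\<dots> = x [^] (M * (n div M)) \<otimes> x [^] (n mod M)" using nat_pow_mult[OF assms(1)] by simp
  also have "x [^] (M * (n div M)) = (x [^] M) [^] (n div M)" using nat_pow_pow[OF assms(1)] by simp
  finally show ?thesis using assms by simp
qed

lemma pow_unit_exp:
  assumes "x \<in> carrier G" "x [^] (M::nat) = \<one>" "u mod M = 1" "1 < M"
  shows "x [^] (u ^ k) = x"
proof -
  have "u ^ k mod M = (u mod M) ^ k mod M" by (simp add: power_mod)
  also have "\<dots> = 1" using assms(3,4) by simp
  finally have "u ^ k mod M = 1" .
  then show ?thesis using pow_mod_nat[OF assms(1,2), of "u ^ k"] assms(1) by simp
qed

end


definition good :: "('a, 'b) monoid_scheme \<Rightarrow> nat \<Rightarrow> nat \<Rightarrow> 'a set \<Rightarrow> bool" where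
  "good G k N Xs \<longleftrightarrow> Xs \<subseteq> carrier G \<and> finite Xs \<and> \<one>\<^bsub>G\<^esub> \<in> Xs
     \<and> (\<forall>x\<in>Xs. \<forall>n::nat. x [^]\<^bsub>G\<^esub> n \<in> Xs) \<and> (\<forall>x\<in>Xs. x [^]\<^bsub>G\<^esub> N = \<one>\<^bsub>G\<^esub>)
     \<and> (\<forall>x\<in>Xs. \<forall>y\<in>Xs. \<forall>e f::nat. N dvd e * f \<longrightarrow> x [^]\<^bsub>G\<^esub> (e ^ k) \<otimes>\<^bsub>G\<^esub> y [^]\<^bsub>G\<^esub> (f ^ k) \<in> Xs)"

context comm_group begin

lemma pow_dvd_one:
  assumes "x \<in> carrier G" "x [^] (N::nat) = \<one>" "N dvd n"
  shows "x [^] n = \<one>"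
proof -
  obtain c where "n = N * c" using assms(3) by blast
  then show ?thesis using nat_pow_pow[OF assms(1), of N c] assms(2) by simp
qed

lemma restrict_good:
  assumes g: "good G k N Xs" and N: "N = M * L" "L dvd u" "u mod M = 1" "1 < M"
  shows "good G k M {x \<in> Xs. x [^] M = \<one>}"
proof -
  let ?X1 = "{x \<in> Xs. x [^] M = \<one>}"
  have Xc: "Xs \<subseteq> carrier G" and fX: "finite Xs" and one: "\<one> \<in> Xs"
    and pw: "\<And>x n. x \<in> Xs \<Longrightarrow> x [^] (n::nat) \<in> Xs"
    and P3: "\<And>x y e f. x \<in> Xs \<Longrightarrow> y \<in> Xs \<Longrightarrow> N dvd e * f \<Longrightarrow> x [^] (e ^ k) \<otimes> y [^] (f ^ k) \<in> Xs"
    using g unfolding good_def by auto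
  have powM: "(x [^] (n::nat)) [^] M = \<one>" if "x \<in> carrier G" "x [^] M = \<one>" for x n
  proof -
    have "(x [^] n) [^] M = x [^] (n * M)" using nat_pow_pow[OF that(1)] by simp
    also have "\<dots> = \<one>" using pow_dvd_one[OF that] by simp
    finally show ?thesis .
  qed
  have "?X1 \<subseteq> carrier G" using Xc by auto
  moreover have "finite ?X1" using fX by simp
  moreover have "\<one> \<in> ?X1" using one by simp
  moreover have "\<forall>x\<in>?X1. \<forall>n::nat. x [^] n \<in> ?X1"
  proof (intro ballI allI)
    fix x and n :: nat assume x: "x \<in> ?X1"
    then have xc: "x \<in> carrier G" using Xc by auto
    have "x [^] n \<in> Xs" using pw x by simp
    moreover have "(x [^] n) [^] M = \<one>" using powM[OF xc] x by simp
    ultimately show "x [^] n \<in> ?X1" by simp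
  qed
  moreover have "\<forall>x\<in>?X1. x [^] M = \<one>" by simp
  moreover have "\<forall>x\<in>?X1. \<forall>y\<in>?X1. \<forall>e f::nat. M dvd e * f \<longrightarrow> x [^] (e ^ k) \<otimes> y [^] (f ^ k) \<in> ?X1"
  proof (intro ballI allI impI)
    fix x y e f assume x: "x \<in> ?X1" and y: "y \<in> ?X1" and d: "M dvd e * (f::nat)"
    have xc: "x \<in> carrier G" and yc: "y \<in> carrier G" using x y Xc by auto
    have Lu: "L dvd u * u" using N(2) by simp
    have "M * L dvd (e * f) * (u * u)" using mult_dvd_mono[OF d Lu] .
    then have dN: "N dvd (e * u) * (f * u)" using N(1) by (simp add: algebra_simps)
    have ex: "x [^] ((e * u) ^ k) = x [^] (e ^ k)" if "x \<in> carrier G" "x [^] M = \<one>" for x e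
    proof -
      have "x [^] ((e * u) ^ k) = (x [^] (u ^ k)) [^] (e ^ k)"
        using nat_pow_pow[OF that(1), of "u ^ k" "e ^ k"] by (simp add: power_mult_distrib mult.commute)
      also have "x [^] (u ^ k) = x" using pow_unit_exp[OF that N(3) N(4)] .
      finally show ?thesis .
    qed
    have "x [^] ((e * u) ^ k) \<otimes> y [^] ((f * u) ^ k) \<in> Xs" using P3[OF _ _ dN] x y by auto
    then have z: "x [^] (e ^ k) \<otimes> y [^] (f ^ k) \<in> Xs" using ex[OF xc] ex[OF yc] x y by auto
    have "(x [^] (e ^ k) \<otimes> y [^] (f ^ k)) [^] M = (x [^] (e ^ k)) [^] M \<otimes> (y [^] (f ^ k)) [^] M"
      using xc yc by (simp add: nat_pow_distrib)
    also have "\<dots> = \<one>" using powM[OF xc] powM[OF yc] x y by simp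
    finally show "x [^] (e ^ k) \<otimes> y [^] (f ^ k) \<in> ?X1" using z by simp
  qed
  ultimately show ?thesis unfolding good_def by blast
qed

lemma abstract_main:
  assumes S: "S \<subseteq> carrier G" "finite S" "card S \<le> r" "generate G S = carrier G"
  shows "0 < N \<Longrightarrow> good G k N Xs \<Longrightarrow> generate G Xs \<subseteq> set_power G Xs r"
proof (induction N arbitrary: Xs rule: less_induct)
  case (less N Xs)
  have Xc: "Xs \<subseteq> carrier G" and fX: "finite Xs" and one: "\<one> \<in> Xs"
    and pw: "\<And>x n. x \<in> Xs \<Longrightarrow> x [^] (n::nat) \<in> Xs"
    and ex: "\<And>x. x \<in> Xs \<Longrightarrow> x [^] N = \<one>"
    and P3: "\<And>x y e f. x \<in> Xs \<Longrightarrow> y \<in> Xs \<Longrightarrow> N dvd e * f \<Longrightarrow> x [^] (e ^ k) \<otimes> y [^] (f ^ k) \<in> Xs"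
    using less.prems(2) unfolding good_def by auto
  from nat_split[OF less.prems(1)] show ?case
  proof
    assume "\<exists>p a. Factorial_Ring.prime p \<and> N = p ^ a"
    then obtain p a where pa: "Factorial_Ring.prime p" "N = p ^ a" by blast
    have exa: "\<And>x. x \<in> Xs \<Longrightarrow> x [^] (p ^ a) = \<one>" using ex pa(2) by simp
    show ?thesis by (rule p_lemma[OF pa(1) S Xc fX one pw exa])
  next
    assume "\<exists>N1 N2. N = N1 * N2 \<and> coprime N1 N2 \<and> 1 < N1 \<and> 1 < N2"
    then obtain N1 N2 where NN: "N = N1 * N2" "coprime N1 N2" "1 < N1" "1 < N2" by blast
    obtain u where u: "u mod N1 = 1" "N2 dvd u" using crt_nat[OF NN(2-4)] by blast
    obtain v where v: "v mod N2 = 1" "N1 dvd v"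
      using crt_nat[OF _ NN(4) NN(3)] NN(2) by (metis coprime_commute)
    define X1 where "X1 = {x \<in> Xs. x [^] N1 = \<one>}"
    define X2 where "X2 = {x \<in> Xs. x [^] N2 = \<one>}"
    have g1: "good G k N1 X1" unfolding X1_def using restrict_good[OF less.prems(2) NN(1) u(2) u(1) NN(3)] .
    have g2: "good G k N2 X2" unfolding X2_def
      using restrict_good[OF less.prems(2) _ v(2) v(1) NN(4)] NN(1) by (simp add: mult.commute)
    have lt1: "N1 < N" using NN by simp
    have lt2: "N2 < N" using NN by simp
    have IH1: "generate G X1 \<subseteq> set_power G X1 r" using less.IH[OF lt1 _ g1] NN by simp
    have IH2: "generate G X2 \<subseteq> set_power G X2 r" using less.IH[OF lt2 _ g2] NN by simp
    have X1c: "X1 \<subseteq> carrier G" and X2c: "X2 \<subseteq> carrier G" using Xc X1_def X2_def by auto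
    have "N1 * N2 dvd v * u" using mult_dvd_mono[OF v(2) u(2)] .
    then have dNuv: "N dvd u * v" using NN(1) by (simp add: mult.commute)
    have comb: "x1 \<otimes> x2 \<in> Xs" if "x1 \<in> X1" "x2 \<in> X2" for x1 x2
    proof -
      have c: "x1 \<in> carrier G" "x2 \<in> carrier G" using that X1c X2c by auto
      have "x1 [^] (u ^ k) = x1" using pow_unit_exp[OF c(1) _ u(1) NN(3)] that X1_def by simp
      moreover have "x2 [^] (v ^ k) = x2" using pow_unit_exp[OF c(2) _ v(1) NN(4)] that X2_def by simp
      moreover have "x1 [^] (u ^ k) \<otimes> x2 [^] (v ^ k) \<in> Xs" using P3[OF _ _ dNuv] that X1_def X2_def by auto
      ultimately show ?thesis by simp
    qed
    have uvmod: "(u + v) mod N = 1"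
    proof -
      have "(u + v) mod N1 = (u mod N1 + v mod N1) mod N1" by (simp add: mod_add_eq)
      also have "\<dots> = 1" using u(1) v(2) NN(3) by simp
      finally have m1: "(u + v) mod N1 = 1" .
      have "(u + v) mod N2 = (u mod N2 + v mod N2) mod N2" by (simp add: mod_add_eq)
      also have "\<dots> = 1" using v(1) u(2) NN(4) by simp
      finally have m2: "(u + v) mod N2 = 1" .
      have pos: "u + v \<ge> 1"
      proof (rule ccontr)
        assume "\<not> u + v \<ge> 1" then have "u + v = 0" by simp
        then show False using m1 by simp
      qed
      have d1: "N1 dvd (u + v) - 1" using dvd_minus_mod[of N1 "u + v"] m1 by simp
      have d2: "N2 dvd (u + v) - 1" using dvd_minus_mod[of N2 "u + v"] m2 by simp
      have "N dvd (u + v) - 1" using divides_mult[OF d1 d2 NN(2)] NN(1) by simp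
      then have "(u + v) mod N = 1 mod N" using mod_eq_dvd_iff_nat[OF pos] by blast
      then show ?thesis using NN by simp
    qed
    show ?thesis
    proof
      fix a assume a: "a \<in> generate G Xs"
      have ac: "a \<in> carrier G" using generate_in_carrier[OF Xc a] .
      have aN: "a [^] N = \<one>" by (rule generate_exponent[OF Xc ex a])
      have img1: "(\<lambda>x. x [^] u) ` Xs \<subseteq> X1"
      proof
        fix z assume "z \<in> (\<lambda>x. x [^] u) ` Xs"
        then obtain x where x: "z = x [^] u" "x \<in> Xs" by blast
        have xc: "x \<in> carrier G" using x Xc by auto
        have "(x [^] u) [^] N1 = x [^] (u * N1)" using nat_pow_pow[OF xc] by simp
        also have "\<dots> = \<one>" using pow_dvd_one[OF xc ex[OF x(2)]] NN(1) u(2) by (simp add: mult.commute)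
        finally show "z \<in> X1" using x pw unfolding X1_def by auto
      qed
      have img2: "(\<lambda>x. x [^] v) ` Xs \<subseteq> X2"
      proof
        fix z assume "z \<in> (\<lambda>x. x [^] v) ` Xs"
        then obtain x where x: "z = x [^] v" "x \<in> Xs" by blast
        have xc: "x \<in> carrier G" using x Xc by auto
        have "(x [^] v) [^] N2 = x [^] (v * N2)" using nat_pow_pow[OF xc] by simp
        also have "\<dots> = \<one>" using pow_dvd_one[OF xc ex[OF x(2)]] NN(1) v(2) by (simp add: mult.commute)
        finally show "z \<in> X2" using x pw unfolding X2_def by auto
      qed
      have "a [^] u \<in> generate G ((\<lambda>x. x [^] u) ` Xs)" by (rule generate_pow_image[OF Xc a])
      then have "a [^] u \<in> generate G X1" using mono_generate[OF img1] by (rule subsetD[rotated])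
      then have au: "a [^] u \<in> set_power G X1 r" using IH1 by (rule subsetD[rotated])
      have "a [^] v \<in> generate G ((\<lambda>x. x [^] v) ` Xs)" by (rule generate_pow_image[OF Xc a])
      then have "a [^] v \<in> generate G X2" using mono_generate[OF img2] by (rule subsetD[rotated])
      then have av: "a [^] v \<in> set_power G X2 r" using IH2 by (rule subsetD[rotated])
      have "a [^] u \<otimes> a [^] v = a [^] (u + v)" using nat_pow_mult[OF ac] by simp
      also have "\<dots> = a [^] ((u + v) mod N)" using pow_mod_nat[OF ac aN] by simp
      also have "\<dots> = a" using uvmod ac by simp
      finally have "a = a [^] u \<otimes> a [^] v" by simp
      moreover have "a [^] u \<otimes> a [^] v \<in> set_power G Xs r"
        using set_power_mult[OF X1c X2c comb au av] .
      ultimately show "a \<in> set_power G Xs r" by simp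
    qed
  qed
qed

end


locale mlin =
  fixes k :: nat and GG :: "nat \<Rightarrow> ('a, 'b) monoid_scheme" and H :: "('c, 'd) monoid_scheme"
    and \<phi> :: "(nat \<Rightarrow> 'a) \<Rightarrow> 'c"
  assumes k1: "k \<ge> 1" and grp: "\<And>i. i < k \<Longrightarrow> group (GG i)"
    and fin: "\<And>i. i < k \<Longrightarrow> finite (carrier (GG i))"
    and cH: "comm_group H" and mh: "multihom k GG H \<phi>"
begin

abbreviation PP where "PP \<equiv> (\<Pi>\<^sub>E i\<in>{..<k}. carrier (GG i))"

lemma upd_in: "g \<in> PP \<Longrightarrow> i < k \<Longrightarrow> x \<in> carrier (GG i) \<Longrightarrow> g(i := x) \<in> PP"
  by (auto simp: PiE_iff extensional_def)

lemma closed: "g \<in> PP \<Longrightarrow> \<phi> g \<in> carrier H"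
  using mh unfolding multihom_def by blast

lemma hom: "g \<in> PP \<Longrightarrow> i < k \<Longrightarrow> x \<in> carrier (GG i) \<Longrightarrow> y \<in> carrier (GG i) \<Longrightarrow>
    \<phi> (g(i := x \<otimes>\<^bsub>GG i\<^esub> y)) = \<phi> (g(i := x)) \<otimes>\<^bsub>H\<^esub> \<phi> (g(i := y))"
  using mh unfolding multihom_def by blast

lemma one: assumes "g \<in> PP" "i < k" shows "\<phi> (g(i := \<one>\<^bsub>GG i\<^esub>)) = \<one>\<^bsub>H\<^esub>"
proof -
  interpret Gi: group "GG i" using grp assms(2) .
  interpret H: comm_group H using cH .
  have oc: "\<one>\<^bsub>GG i\<^esub> \<in> carrier (GG i)" by simp
  have c: "\<phi> (g(i := \<one>\<^bsub>GG i\<^esub>)) \<in> carrier H" using closed upd_in[OF assms oc] by blast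
  have "\<phi> (g(i := \<one>\<^bsub>GG i\<^esub>)) = \<phi> (g(i := \<one>\<^bsub>GG i\<^esub> \<otimes>\<^bsub>GG i\<^esub> \<one>\<^bsub>GG i\<^esub>))" by simp
  also have "\<dots> = \<phi> (g(i := \<one>\<^bsub>GG i\<^esub>)) \<otimes>\<^bsub>H\<^esub> \<phi> (g(i := \<one>\<^bsub>GG i\<^esub>))"
    using hom[OF assms oc oc] .
  finally have "\<phi> (g(i := \<one>\<^bsub>GG i\<^esub>)) \<otimes>\<^bsub>H\<^esub> \<one>\<^bsub>H\<^esub> = \<phi> (g(i := \<one>\<^bsub>GG i\<^esub>)) \<otimes>\<^bsub>H\<^esub> \<phi> (g(i := \<one>\<^bsub>GG i\<^esub>))"
    using c by simp
  then show ?thesis using c by (metis H.l_cancel H.one_closed)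
qed

lemma pow: assumes "g \<in> PP" "i < k" "x \<in> carrier (GG i)"
  shows "\<phi> (g(i := x [^]\<^bsub>GG i\<^esub> (n::nat))) = \<phi> (g(i := x)) [^]\<^bsub>H\<^esub> n"
proof (induction n)
  case 0
  have "\<phi> (g(i := x [^]\<^bsub>GG i\<^esub> (0::nat))) = \<phi> (g(i := \<one>\<^bsub>GG i\<^esub>))" by (simp only: nat_pow_0)
  also have "\<dots> = \<one>\<^bsub>H\<^esub>" by (rule one[OF assms(1,2)])
  finally show ?case by (simp only: nat_pow_0)
next
  case (Suc n)
  interpret Gi: group "GG i" using grp assms(2) .
  have "\<phi> (g(i := x [^]\<^bsub>GG i\<^esub> Suc n)) = \<phi> (g(i := x [^]\<^bsub>GG i\<^esub> n \<otimes>\<^bsub>GG i\<^esub> x))" by simp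
  also have "\<dots> = \<phi> (g(i := x [^]\<^bsub>GG i\<^esub> n)) \<otimes>\<^bsub>H\<^esub> \<phi> (g(i := x))"
    using hom[OF assms(1,2) _ assms(3)] assms(3) by simp
  also have "\<dots> = \<phi> (g(i := x)) [^]\<^bsub>H\<^esub> Suc n" by (simp only: Suc.IH nat_pow_Suc)
  finally show ?case .
qed

definition NN where "NN = order (GG 0)"

lemma NN_pos: "NN > 0"
proof -
  interpret G0: group "GG 0" using grp k1 by simp
  have "finite (carrier (GG 0))" using fin k1 by simp
  then show ?thesis unfolding NN_def order_def using G0.one_closed card_gt_0_iff by blast
qed

lemma expo: assumes "g \<in> PP" shows "\<phi> g [^]\<^bsub>H\<^esub> NN = \<one>\<^bsub>H\<^esub>"
proof -
  interpret G0: group "GG 0" using grp k1 by simp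
  have k0: "0 < k" using k1 by simp
  have g0: "g 0 \<in> carrier (GG 0)" using assms k0 by auto
  have "\<phi> g = \<phi> (g(0 := g 0))" by simp
  then have "\<phi> g [^]\<^bsub>H\<^esub> NN = \<phi> (g(0 := g 0 [^]\<^bsub>GG 0\<^esub> NN))" using pow[OF assms k0 g0] by simp
  also have "g 0 [^]\<^bsub>GG 0\<^esub> NN = \<one>\<^bsub>GG 0\<^esub>" unfolding NN_def using G0.pow_order_eq_1[OF g0] .
  also have "\<phi> (g(0 := \<one>\<^bsub>GG 0\<^esub>)) = \<one>\<^bsub>H\<^esub>" by (rule one[OF assms k0])
  finally show ?thesis .
qed

end


context mlin begin

lemma pow_all:
  assumes a: "a \<in> PP"
  shows "\<phi> (\<lambda>i\<in>{..<k}. a i [^]\<^bsub>GG i\<^esub> (e::nat)) = \<phi> a [^]\<^bsub>H\<^esub> (e ^ k)"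
proof -
  interpret H: comm_group H using cH .
  define F where "F j = (\<lambda>i\<in>{..<k}. if i < j then a i [^]\<^bsub>GG i\<^esub> e else a i)" for j
  have FP: "F j \<in> PP" for j
  proof -
    have "a i [^]\<^bsub>GG i\<^esub> e \<in> carrier (GG i)" if "i < k" for i
      using group.is_monoid[OF grp[OF that]] a that by (auto intro: monoid.nat_pow_closed)
    then show ?thesis unfolding F_def using a by auto
  qed
  have gen: "j \<le> k \<Longrightarrow> \<phi> (F j) = \<phi> a [^]\<^bsub>H\<^esub> (e ^ j)" for j
  proof (induction j)
    case 0
    have "F 0 = a" unfolding F_def using a by (auto simp: PiE_iff extensional_def)
    then show ?case using closed[OF a] by simp
  next
    case (Suc j)
    then have jk: "j < k" by simp
    have aj: "a j \<in> carrier (GG j)" using a jk by auto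
    have Fs: "F (Suc j) = (F j)(j := a j [^]\<^bsub>GG j\<^esub> e)"
      unfolding F_def by (rule ext) (auto simp: jk)
    have Fj: "(F j)(j := a j) = F j" unfolding F_def by (rule ext) (auto simp: jk)
    have "\<phi> (F (Suc j)) = \<phi> ((F j)(j := a j)) [^]\<^bsub>H\<^esub> e"
      unfolding Fs by (rule pow[OF FP jk aj])
    also have "\<dots> = (\<phi> a [^]\<^bsub>H\<^esub> (e ^ j)) [^]\<^bsub>H\<^esub> e" using Fj Suc jk by simp
    also have "\<dots> = \<phi> a [^]\<^bsub>H\<^esub> (e ^ j * e)" using H.nat_pow_pow closed[OF a] by blast
    finally show ?case by (simp add: mult.commute)
  qed
  have "F k = (\<lambda>i\<in>{..<k}. a i [^]\<^bsub>GG i\<^esub> e)" unfolding F_def by (rule ext) auto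
  then show ?thesis using gen[of k] by simp
qed

lemma mixed:
  assumes t: "t \<in> PP" and ij: "i < k" "j < k" "i \<noteq> j"
    and ai: "x \<in> carrier (GG i)" and bj: "y \<in> carrier (GG j)"
    and ti: "t i = x [^]\<^bsub>GG i\<^esub> (e::nat)" and tj: "t j = y [^]\<^bsub>GG j\<^esub> (f::nat)"
    and d: "NN dvd e * f"
  shows "\<phi> t = \<one>\<^bsub>H\<^esub>"
proof -
  interpret H: comm_group H using cH .
  define t' where "t' = t(i := x)"
  have t'P: "t' \<in> PP" unfolding t'_def using upd_in[OF t ij(1) ai] .
  define dd where "dd = t'(j := y)"
  have dP: "dd \<in> PP" unfolding dd_def using upd_in[OF t'P ij(2) bj] .
  have tt: "t(i := x [^]\<^bsub>GG i\<^esub> e) = t" using ti by auto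
  have "\<phi> t = \<phi> (t(i := x [^]\<^bsub>GG i\<^esub> e))" by (simp only: tt)
  also have "\<dots> = \<phi> t' [^]\<^bsub>H\<^esub> e" unfolding t'_def by (rule pow[OF t ij(1) ai])
  finally have e1: "\<phi> t = \<phi> t' [^]\<^bsub>H\<^esub> e" .
  have tt': "t'(j := y [^]\<^bsub>GG j\<^esub> f) = t'" using tj ij(3) unfolding t'_def by auto
  have "\<phi> t' = \<phi> (t'(j := y [^]\<^bsub>GG j\<^esub> f))" by (simp only: tt')
  also have "\<dots> = \<phi> dd [^]\<^bsub>H\<^esub> f" unfolding dd_def by (rule pow[OF t'P ij(2) bj])
  finally have e2: "\<phi> t' = \<phi> dd [^]\<^bsub>H\<^esub> f" .
  have "\<phi> t = \<phi> dd [^]\<^bsub>H\<^esub> (f * e)" using e1 e2 H.nat_pow_pow closed[OF dP] by simp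
  also have "\<dots> = \<one>\<^bsub>H\<^esub>" using H.pow_dvd_one[OF closed[OF dP] expo[OF dP]] d by (simp add: mult.commute)
  finally show ?thesis .
qed

end


context mlin begin

lemma expansion:
  assumes a: "a \<in> PP" and b: "b \<in> PP" and d: "NN dvd e * f"
  shows "\<phi> a [^]\<^bsub>H\<^esub> ((e::nat) ^ k) \<otimes>\<^bsub>H\<^esub> \<phi> b [^]\<^bsub>H\<^esub> ((f::nat) ^ k) \<in> \<phi> ` PP"
proof -
  interpret H: comm_group H using cH .
  define A where "A = (\<lambda>i\<in>{..<k}. a i [^]\<^bsub>GG i\<^esub> e)"
  define B where "B = (\<lambda>i\<in>{..<k}. b i [^]\<^bsub>GG i\<^esub> f)"
  have Ac: "A i \<in> carrier (GG i)" if "i < k" for i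
    using group.is_monoid[OF grp[OF that]] a that unfolding A_def by (auto intro: monoid.nat_pow_closed)
  have Bc: "B i \<in> carrier (GG i)" if "i < k" for i
    using group.is_monoid[OF grp[OF that]] b that unfolding B_def by (auto intro: monoid.nat_pow_closed)
  have AP: "A \<in> PP" using Ac unfolding A_def by auto
  have BP: "B \<in> PP" using Bc unfolding B_def by auto
  define T where "T c = (\<lambda>i\<in>{..<k}. if c i = (0::nat) then A i else if c i = 1 then B i
                                   else A i \<otimes>\<^bsub>GG i\<^esub> B i)" for c
  have TP: "T c \<in> PP" for c
  proof -
    have "A i \<otimes>\<^bsub>GG i\<^esub> B i \<in> carrier (GG i)" if "i < k" for i
      using group.is_monoid[OF grp[OF that]] Ac[OF that] Bc[OF that] by (auto intro: monoid.m_closed)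
    then show ?thesis unfolding T_def using Ac Bc by auto
  qed
  have cA: "\<phi> A \<in> carrier H" using closed[OF AP] .
  have cB: "\<phi> B \<in> carrier H" using closed[OF BP] .
  have k0: "0 < k" using k1 by simp
  have claim: "\<forall>c::nat \<Rightarrow> nat. card {i\<in>{..<k}. 2 \<le> c i} = n \<longrightarrow>
      \<phi> (T c) = (if \<forall>i<k. c i \<noteq> 1 then \<phi> A else \<one>\<^bsub>H\<^esub>) \<otimes>\<^bsub>H\<^esub> (if \<forall>i<k. c i \<noteq> 0 then \<phi> B else \<one>\<^bsub>H\<^esub>)" for n
  proof (induction n)
    case 0
    show ?case
    proof (intro allI impI)
      fix c :: "nat \<Rightarrow> nat" assume "card {i\<in>{..<k}. 2 \<le> c i} = 0"
      then have le1: "\<forall>i<k. c i \<le> 1" by auto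
      show "\<phi> (T c) = (if \<forall>i<k. c i \<noteq> 1 then \<phi> A else \<one>\<^bsub>H\<^esub>) \<otimes>\<^bsub>H\<^esub> (if \<forall>i<k. c i \<noteq> 0 then \<phi> B else \<one>\<^bsub>H\<^esub>)"
      proof (cases "\<forall>i<k. c i = 0")
        case True
        have TA: "T c = A" unfolding T_def A_def by (rule ext) (auto simp: True)
        have n2: "\<not> (\<forall>i<k. c i \<noteq> 0)" using True k0 by auto
        have n1: "\<forall>i<k. c i \<noteq> 1" using True by auto
        have h1: "(if \<forall>i<k. c i \<noteq> 1 then \<phi> A else \<one>\<^bsub>H\<^esub>) = \<phi> A" using n1 by (rule if_P)
        have h2: "(if \<forall>i<k. c i \<noteq> 0 then \<phi> B else \<one>\<^bsub>H\<^esub>) = \<one>\<^bsub>H\<^esub>" using n2 by (rule if_not_P)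
        show ?thesis unfolding h1 h2 TA using cA by simp
      next
        case False
        then obtain i where i: "i < k" "c i = 1" using le1 by (metis le_neq_implies_less less_one)
        show ?thesis
        proof (cases "\<forall>i<k. c i = 1")
          case True
          have TB: "T c = B" unfolding T_def B_def by (rule ext) (auto simp: True)
          have n1: "\<not> (\<forall>i<k. c i \<noteq> 1)" using True k0 by auto
          have n2: "\<forall>i<k. c i \<noteq> 0" using True by auto
          have h1: "(if \<forall>i<k. c i \<noteq> 1 then \<phi> A else \<one>\<^bsub>H\<^esub>) = \<one>\<^bsub>H\<^esub>" using n1 by (rule if_not_P)
          have h2: "(if \<forall>i<k. c i \<noteq> 0 then \<phi> B else \<one>\<^bsub>H\<^esub>) = \<phi> B" using n2 by (rule if_P)
          show ?thesis unfolding h1 h2 TB using cB by simp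
        next
          case False
          then obtain j where j: "j < k" "c j = 0" using le1 by (metis le_neq_implies_less less_one)
          have ij: "i \<noteq> j" using i j by auto
          have "\<phi> (T c) = \<one>\<^bsub>H\<^esub>"
          proof (rule mixed[OF TP j(1) i(1) ij[symmetric]])
            show "a j \<in> carrier (GG j)" using a j by auto
            show "b i \<in> carrier (GG i)" using b i by auto
            show "T c j = a j [^]\<^bsub>GG j\<^esub> e" unfolding T_def A_def using j by simp
            show "T c i = b i [^]\<^bsub>GG i\<^esub> f" unfolding T_def B_def using i by simp
            show "NN dvd e * f" by (rule d)
          qed
          moreover have n1: "\<not> (\<forall>i<k. c i \<noteq> 1)" using i by auto
          moreover have n2: "\<not> (\<forall>i<k. c i \<noteq> 0)" using j by auto
          have h1: "(if \<forall>i<k. c i \<noteq> 1 then \<phi> A else \<one>\<^bsub>H\<^esub>) = \<one>\<^bsub>H\<^esub>" using n1 by (rule if_not_P)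
          have h2: "(if \<forall>i<k. c i \<noteq> 0 then \<phi> B else \<one>\<^bsub>H\<^esub>) = \<one>\<^bsub>H\<^esub>" using n2 by (rule if_not_P)
          show ?thesis unfolding h1 h2 using calculation(1) by simp
        qed
      qed
    qed
  next
    case (Suc n)
    show ?case
    proof (intro allI impI)
      fix c :: "nat \<Rightarrow> nat" assume cc: "card {i\<in>{..<k}. 2 \<le> c i} = Suc n"
      then obtain i0 where i0: "i0 \<in> {i\<in>{..<k}. 2 \<le> c i}" by (metis card.empty empty_iff nat.distinct(1) ex_in_conv)
      have i0k: "i0 < k" and ci0: "2 \<le> c i0" using i0 by auto
      define c0 where "c0 = c(i0 := 0)"
      define c1 where "c1 = c(i0 := 1)"
      have setc0: "{i\<in>{..<k}. 2 \<le> c0 i} = {i\<in>{..<k}. 2 \<le> c i} - {i0}" unfolding c0_def by auto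
      have setc1: "{i\<in>{..<k}. 2 \<le> c1 i} = {i\<in>{..<k}. 2 \<le> c i} - {i0}" unfolding c1_def by auto
      have card0: "card {i\<in>{..<k}. 2 \<le> c0 i} = n" using setc0 cc i0 by simp
      have card1: "card {i\<in>{..<k}. 2 \<le> c1 i} = n" using setc1 cc i0 by simp
      have T0: "T c0 = (T c)(i0 := A i0)" unfolding T_def c0_def by (rule ext) (auto simp: i0k)
      have T1: "T c1 = (T c)(i0 := B i0)" unfolding T_def c1_def by (rule ext) (auto simp: i0k)
      have Tc: "(T c)(i0 := A i0 \<otimes>\<^bsub>GG i0\<^esub> B i0) = T c" unfolding T_def using ci0 i0k by (auto)
      have "\<phi> (T c) = \<phi> ((T c)(i0 := A i0 \<otimes>\<^bsub>GG i0\<^esub> B i0))" by (simp only: Tc)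
      also have "\<dots> = \<phi> (T c0) \<otimes>\<^bsub>H\<^esub> \<phi> (T c1)"
        unfolding T0 T1 by (rule hom[OF TP i0k Ac[OF i0k] Bc[OF i0k]])
      finally have split: "\<phi> (T c) = \<phi> (T c0) \<otimes>\<^bsub>H\<^esub> \<phi> (T c1)" .
      have ci01: "c i0 \<noteq> 1" "c i0 \<noteq> 0" using ci0 by auto
      have e0: "(\<forall>i<k. c0 i \<noteq> 1) = (\<forall>i<k. c i \<noteq> 1)"
      proof
        assume HH: "\<forall>i<k. c0 i \<noteq> 1"
        show "\<forall>i<k. c i \<noteq> 1"
        proof (intro allI impI)
          fix i assume "i < k"
          show "c i \<noteq> 1"
          proof (cases "i = i0")
            case True then show ?thesis using ci01 by simp
          next
            case False then show ?thesis using HH[rule_format, OF \<open>i < k\<close>] unfolding c0_def by simp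
          qed
        qed
      next
        assume "\<forall>i<k. c i \<noteq> 1" then show "\<forall>i<k. c0 i \<noteq> 1" unfolding c0_def by simp
      qed
      have e0': "\<not> (\<forall>i<k. c0 i \<noteq> 0)" unfolding c0_def using i0k by auto
      have e1: "(\<forall>i<k. c1 i \<noteq> 0) = (\<forall>i<k. c i \<noteq> 0)"
      proof
        assume HH: "\<forall>i<k. c1 i \<noteq> 0"
        show "\<forall>i<k. c i \<noteq> 0"
        proof (intro allI impI)
          fix i assume "i < k"
          show "c i \<noteq> 0"
          proof (cases "i = i0")
            case True then show ?thesis using ci01 by simp
          next
            case False then show ?thesis using HH[rule_format, OF \<open>i < k\<close>] unfolding c1_def by simp
          qed
        qed
      next
        assume "\<forall>i<k. c i \<noteq> 0" then show "\<forall>i<k. c1 i \<noteq> 0" unfolding c1_def by simp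
      qed
      have e1': "\<not> (\<forall>i<k. c1 i \<noteq> 1)" unfolding c1_def using i0k by auto
      have IH0: "\<phi> (T c0) = (if \<forall>i<k. c0 i \<noteq> 1 then \<phi> A else \<one>\<^bsub>H\<^esub>) \<otimes>\<^bsub>H\<^esub> (if \<forall>i<k. c0 i \<noteq> 0 then \<phi> B else \<one>\<^bsub>H\<^esub>)"
        using Suc.IH card0 by blast
      have IH1: "\<phi> (T c1) = (if \<forall>i<k. c1 i \<noteq> 1 then \<phi> A else \<one>\<^bsub>H\<^esub>) \<otimes>\<^bsub>H\<^esub> (if \<forall>i<k. c1 i \<noteq> 0 then \<phi> B else \<one>\<^bsub>H\<^esub>)"
        using Suc.IH card1 by blast
      have h0: "(if \<forall>i<k. c0 i \<noteq> 0 then \<phi> B else \<one>\<^bsub>H\<^esub>) = \<one>\<^bsub>H\<^esub>" using e0' by (rule if_not_P)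
      have h1: "(if \<forall>i<k. c1 i \<noteq> 1 then \<phi> A else \<one>\<^bsub>H\<^esub>) = \<one>\<^bsub>H\<^esub>" using e1' by (rule if_not_P)
      have X1: "(if \<forall>i<k. c i \<noteq> 1 then \<phi> A else \<one>\<^bsub>H\<^esub>) \<in> carrier H" using cA by simp
      have X2: "(if \<forall>i<k. c i \<noteq> 0 then \<phi> B else \<one>\<^bsub>H\<^esub>) \<in> carrier H" using cB by simp
      have "\<phi> (T c0) = (if \<forall>i<k. c i \<noteq> 1 then \<phi> A else \<one>\<^bsub>H\<^esub>)"
        using IH0 unfolding h0 e0 using X1 by simp
      moreover have "\<phi> (T c1) = (if \<forall>i<k. c i \<noteq> 0 then \<phi> B else \<one>\<^bsub>H\<^esub>)"
        using IH1 unfolding h1 e1 using X2 by simp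
      ultimately show "\<phi> (T c) = (if \<forall>i<k. c i \<noteq> 1 then \<phi> A else \<one>\<^bsub>H\<^esub>) \<otimes>\<^bsub>H\<^esub> (if \<forall>i<k. c i \<noteq> 0 then \<phi> B else \<one>\<^bsub>H\<^esub>)"
        using split by simp
    qed
  qed
  have "card {i\<in>{..<k}. 2 \<le> (\<lambda>_. 2::nat) i} = k" by simp
  then have "\<phi> (T (\<lambda>_. 2)) = \<phi> A \<otimes>\<^bsub>H\<^esub> \<phi> B" using claim[of k] by simp
  moreover have "\<phi> A = \<phi> a [^]\<^bsub>H\<^esub> (e ^ k)" unfolding A_def by (rule pow_all[OF a])
  moreover have "\<phi> B = \<phi> b [^]\<^bsub>H\<^esub> (f ^ k)" unfolding B_def by (rule pow_all[OF b])
  ultimately have "\<phi> a [^]\<^bsub>H\<^esub> (e ^ k) \<otimes>\<^bsub>H\<^esub> \<phi> b [^]\<^bsub>H\<^esub> (f ^ k) = \<phi> (T (\<lambda>_. 2))" by simp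
  then show ?thesis using TP by blast
qed

end


context mlin begin

lemma good_img: "good H k NN (\<phi> ` PP)"
proof -
  interpret H: comm_group H using cH .
  have k0: "0 < k" using k1 by simp
  have c1: "\<phi> ` PP \<subseteq> carrier H" using closed by blast
  have c2: "finite (\<phi> ` PP)" using fin by (intro finite_imageI finite_PiE) auto
  define g0 where "g0 = (\<lambda>i\<in>{..<k}. \<one>\<^bsub>GG i\<^esub>)"
  have g0P: "g0 \<in> PP" unfolding g0_def using grp by (auto intro: group.is_monoid monoid.one_closed)
  have "g0(0 := \<one>\<^bsub>GG 0\<^esub>) = g0" unfolding g0_def using k0 by auto
  then have "\<phi> g0 = \<one>\<^bsub>H\<^esub>" using one[OF g0P k0] by simp
  then have c3: "\<one>\<^bsub>H\<^esub> \<in> \<phi> ` PP" using g0P by (metis image_eqI)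
  have c4: "\<forall>x\<in>\<phi> ` PP. \<forall>n::nat. x [^]\<^bsub>H\<^esub> n \<in> \<phi> ` PP"
  proof (intro ballI allI)
    fix x and n :: nat assume "x \<in> \<phi> ` PP"
    then obtain g where g: "x = \<phi> g" "g \<in> PP" by blast
    have g0c: "g 0 \<in> carrier (GG 0)" using g k0 by auto
    interpret G0: group "GG 0" using grp k0 .
    have "g(0 := g 0) = g" by simp
    then have "x [^]\<^bsub>H\<^esub> n = \<phi> (g(0 := g 0 [^]\<^bsub>GG 0\<^esub> n))" using pow[OF g(2) k0 g0c, of n] g(1) by simp
    moreover have "g(0 := g 0 [^]\<^bsub>GG 0\<^esub> n) \<in> PP" using upd_in[OF g(2) k0] g0c by simp
    ultimately show "x [^]\<^bsub>H\<^esub> n \<in> \<phi> ` PP" by simp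
  qed
  have c5: "\<forall>x\<in>\<phi> ` PP. x [^]\<^bsub>H\<^esub> NN = \<one>\<^bsub>H\<^esub>" using expo by blast
  have c6: "\<forall>x\<in>\<phi> ` PP. \<forall>y\<in>\<phi> ` PP. \<forall>e f::nat. NN dvd e * f \<longrightarrow>
      x [^]\<^bsub>H\<^esub> (e ^ k) \<otimes>\<^bsub>H\<^esub> y [^]\<^bsub>H\<^esub> (f ^ k) \<in> \<phi> ` PP"
    using expansion by blast
  have "good H k NN (\<phi> ` PP)" unfolding good_def
    apply (intro conjI)
    apply (rule c1)
    apply (rule c2)
    apply (rule c3)
    apply (rule c4)
    apply (rule c5)
    apply (rule c6)
    done
  then show ?thesis .
qed

end

theorem proposition6p1:
  fixes k r :: nat and G :: "nat \<Rightarrow> ('a, 'b) monoid_scheme" and H :: "('c, 'd) monoid_scheme"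
    and \<phi> :: "(nat \<Rightarrow> 'a) \<Rightarrow> 'c"
  assumes "k \<ge> 1" and "r \<ge> 1"
    and "\<And>i. i < k \<Longrightarrow> nilpotent_group (G i) \<and> finite (carrier (G i))"
    and "comm_group H" and "rank_le H r"
    and "multihom k G H \<phi>"
  shows "generate H (\<phi> ` (\<Pi>\<^sub>E i\<in>{..<k}. carrier (G i)))
           \<subseteq> set_power H (\<phi> ` (\<Pi>\<^sub>E i\<in>{..<k}. carrier (G i))) r"
proof -
  interpret M: mlin k G H \<phi>
    unfolding mlin_def using assms(1,3,4,6) unfolding nilpotent_group_def by blast
  interpret H: comm_group H using assms(4) .
  obtain S where S: "S \<subseteq> carrier H" "finite S" "card S \<le> r" "generate H S = carrier H"
    using assms(5) unfolding rank_le_def by blast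
  show ?thesis using H.abstract_main[OF S M.NN_pos M.good_img] .
qed


end
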